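(* Let $T=K[X,Y]$ be $\mathbb Z/n\mathbb Z$-graded by $\deg X=\overline1$, $\deg Y=\overline{-1}$, let $S=T/(X^{n-2}-Y^2)=\bigoplus_{\bar i\in\mathbb Z/n\mathbb Z}S_{\bar i}$ with the induced grading, and regard $S$ as an $R$-algebra via $x\mapsto \overline{XY}$. Let $S^{[n]}\subset M_n(S)$ be the $R$-subalgebra whose $(i,j)$ entry ranges over $S_{\overline{j-i}}$. Then there is an isomorphism of $R$-algebras $S^{[n]}\cong\Lambda$.
   Context: $K$ a field, $R=K[x]$, $n\ge3$. $\Lambda\subset M_n(K(x))$ is the $R$-order whose $(i,j)$ entry ranges over $x^{c_{ij}}R$, with $c_{ij}=0$ for $i\le j$ except $c_{1n}=-1$, $c_{ij}=1$ for $i=j+1$, $c_{ij}=2$ for $i\ge j+2$. *)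

theory Defs
  imports "HOL-Computational_Algebra.Polynomial" "HOL-Computational_Algebra.Fraction_Field"
begin

(* K = 'a :: field, R = K[x] = 'a poly.
   T = K[X,Y] is represented as ('a poly) poly: polynomials in Y with coefficients in K[X].
   The monomial X^a Y^b of p :: 'a poly poly has coefficient  coeff (coeff p b) a. *)

definition Xv :: "'a::comm_ring_1 poly poly" where "Xv = [:[:0, 1:]:]"
definition Yv :: "'a::comm_ring_1 poly poly" where "Yv = [:0, 1:]"

definition frel :: "nat \<Rightarrow> 'a::comm_ring_1 poly poly" where
  "frel n = Xv ^ (n - 2) - Yv ^ 2"

definition T_hom :: "nat \<Rightarrow> int \<Rightarrow> 'a::comm_ring_1 poly poly \<Rightarrow> bool" where
  "T_hom n k p \<longleftrightarrow>
     (\<forall>a b. coeff (coeff p b) a \<noteq> 0 \<longrightarrow> int n dvd (int a - int b - k))"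

(* S = T/(f): an element of S is a coset p + (f) *)
definition Scls :: "nat \<Rightarrow> 'a::comm_ring_1 poly poly \<Rightarrow> 'a poly poly set" where
  "Scls n p = {q. frel n dvd (q - p)}"

definition Scarrier :: "nat \<Rightarrow> 'a::comm_ring_1 poly poly set set" where
  "Scarrier n = range (Scls n)"

definition Srep :: "'a poly poly set \<Rightarrow> 'a poly poly" where
  "Srep A = (SOME p. p \<in> A)"

definition Sgr :: "nat \<Rightarrow> int \<Rightarrow> 'a::comm_ring_1 poly poly set set" where
  "Sgr n k = Scls n ` {q. T_hom n k q}"

definition Rmap :: "'a::comm_ring_1 poly \<Rightarrow> 'a poly poly" where
  "Rmap r = poly (map_poly (\<lambda>c. [:[:c:]:]) r) (Xv * Yv)"

(* n x n matrices indexed by {1..n}, represented as functions, fixed value outside the range *)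
definition inrng :: "nat \<Rightarrow> nat \<Rightarrow> nat \<Rightarrow> bool" where
  "inrng n i j \<longleftrightarrow> i \<in> {1..n} \<and> j \<in> {1..n}"

definition Sn :: "nat \<Rightarrow> (nat \<Rightarrow> nat \<Rightarrow> 'a::comm_ring_1 poly poly set) set" where
  "Sn n = {M. \<forall>i j. (inrng n i j \<longrightarrow> M i j \<in> Sgr n (int j - int i))
                    \<and> (\<not> inrng n i j \<longrightarrow> M i j = Scls n 0)}"

definition Smat_add :: "nat \<Rightarrow> (nat \<Rightarrow> nat \<Rightarrow> 'a::comm_ring_1 poly poly set) \<Rightarrow> _ \<Rightarrow> _" where
  "Smat_add n A B = (\<lambda>i j. if inrng n i j then Scls n (Srep (A i j) + Srep (B i j)) else Scls n 0)"

definition Smat_mul :: "nat \<Rightarrow> (nat \<Rightarrow> nat \<Rightarrow> 'a::comm_ring_1 poly poly set) \<Rightarrow> _ \<Rightarrow> _" where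
  "Smat_mul n A B = (\<lambda>i j. if inrng n i j
       then Scls n (\<Sum>k\<in>{1..n}. Srep (A i k) * Srep (B k j)) else Scls n 0)"

definition Smat_one :: "nat \<Rightarrow> nat \<Rightarrow> nat \<Rightarrow> 'a::comm_ring_1 poly poly set" where
  "Smat_one n = (\<lambda>i j. if inrng n i j then Scls n (if i = j then 1 else 0) else Scls n 0)"

definition Smat_scale :: "nat \<Rightarrow> 'a::comm_ring_1 poly \<Rightarrow> (nat \<Rightarrow> nat \<Rightarrow> 'a poly poly set) \<Rightarrow> _" where
  "Smat_scale n r A = (\<lambda>i j. if inrng n i j then Scls n (Rmap r * Srep (A i j)) else Scls n 0)"

definition cexp :: "nat \<Rightarrow> nat \<Rightarrow> nat \<Rightarrow> int" where
  "cexp n i j = (if i \<le> j then (if i = 1 \<and> j = n then -1 else 0)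
                 else if i = j + 1 then 1 else 2)"

definition xK :: "'a::field poly fract" where "xK = Fract [:0, 1:] 1"

definition Lam :: "nat \<Rightarrow> (nat \<Rightarrow> nat \<Rightarrow> 'a::field poly fract) set" where
  "Lam n = {M. \<forall>i j. (inrng n i j \<longrightarrow> (\<exists>p. M i j = xK powi cexp n i j * Fract p 1))
                    \<and> (\<not> inrng n i j \<longrightarrow> M i j = 0)}"

definition Lmat_add :: "nat \<Rightarrow> (nat \<Rightarrow> nat \<Rightarrow> 'a::field poly fract) \<Rightarrow> _ \<Rightarrow> _" where
  "Lmat_add n A B = (\<lambda>i j. if inrng n i j then A i j + B i j else 0)"

definition Lmat_mul :: "nat \<Rightarrow> (nat \<Rightarrow> nat \<Rightarrow> 'a::field poly fract) \<Rightarrow> _ \<Rightarrow> _" where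
  "Lmat_mul n A B = (\<lambda>i j. if inrng n i j then (\<Sum>k\<in>{1..n}. A i k * B k j) else 0)"

definition Lmat_one :: "nat \<Rightarrow> nat \<Rightarrow> nat \<Rightarrow> 'a::field poly fract" where
  "Lmat_one n = (\<lambda>i j. if inrng n i j \<and> i = j then 1 else 0)"

definition Lmat_scale :: "nat \<Rightarrow> 'a::field poly \<Rightarrow> (nat \<Rightarrow> nat \<Rightarrow> 'a poly fract) \<Rightarrow> _" where
  "Lmat_scale n r A = (\<lambda>i j. if inrng n i j then Fract r 1 * A i j else 0)"

end

theory Submission imports Defs begin

lemma map_poly_hom_add:
  assumes "h 0 = 0" "\<And>x y. h (x + y) = h x + h y"
  shows "map_poly h (p + q) = map_poly h p + map_poly h q"
  by (intro poly_eqI) (simp add: coeff_map_poly assms)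

lemma map_poly_hom_mult:
  assumes "h 0 = 0" "\<And>x y. h (x + y) = h x + h y" "\<And>x y. h (x * y) = h x * h y"
  shows "map_poly h (p * q) = map_poly h p * map_poly h q"
proof (induction p)
  case 0 then show ?case by simp
next
  case (pCons a p)
  have "map_poly h (pCons a p * q) = map_poly h (smult a q) + map_poly h (pCons 0 (p * q))"
    by (simp add: map_poly_hom_add assms)
  also have "\<dots> = smult (h a) (map_poly h q) + pCons 0 (map_poly h p * map_poly h q)"
    using pCons.IH by (simp add: map_poly_smult map_poly_pCons assms)
  also have "\<dots> = map_poly h (pCons a p) * map_poly h q"
    by (simp add: map_poly_pCons assms)
  finally show ?case .
qed

definition hX :: "'a::field poly \<Rightarrow> 'a poly" where "hX c = pcompose c (monom 1 2)"

definition psi :: "nat \<Rightarrow> 'a::field poly poly \<Rightarrow> 'a poly" where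
  "psi n p = poly (map_poly hX p) (monom 1 (n - 2))"

lemma hX_0: "hX 0 = 0" and hX_add: "hX (x + y) = hX x + hX y" and hX_mult: "hX (x * y) = hX x * hX y"
  by (simp_all add: hX_def pcompose_add pcompose_mult)
lemma hX_1: "hX 1 = 1" unfolding hX_def by (rule pcompose_1)

lemma psi_add: "psi n (p + q) = psi n p + psi n q"
  by (simp add: psi_def map_poly_hom_add hX_0 hX_add)
lemma psi_mult: "psi n (p * q) = psi n p * psi n q"
  by (simp add: psi_def map_poly_hom_mult hX_0 hX_add hX_mult)
lemma psi_0[simp]: "psi n 0 = 0" by (simp add: psi_def)
lemma psi_1[simp]: "psi n 1 = 1" by (simp add: psi_def hX_1)
lemma psi_uminus: "psi n (- p) = - psi n p"
  using psi_add[of n p "-p"] by (metis add.commute add_eq_0_iff psi_0 right_minus)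
lemma psi_diff: "psi n (p - q) = psi n p - psi n q"
  using psi_add[of n p "-q"] psi_uminus[of n q] by simp
lemma psi_power: "psi n (p ^ k) = psi n p ^ k"
  by (induction k) (simp_all add: psi_mult)
lemma psi_sum: "psi n (sum f S) = sum (\<lambda>x. psi n (f x)) S"
  by (induction S rule: infinite_finite_induct) (simp_all add: psi_add)
lemma psi_const: "psi n [:[:c:]:] = [:c:]"
  by (simp add: psi_def hX_def map_poly_pCons)
lemma psi_Xv: "psi n Xv = monom 1 2"
  by (simp add: psi_def hX_def Xv_def map_poly_pCons pcompose_pCons)
lemma psi_Yv: "psi n Yv = monom 1 (n - 2)"
  by (simp add: psi_def Yv_def map_poly_pCons hX_0 hX_1)

lemma psi_frel: "n \<ge> 2 \<Longrightarrow> psi n (frel n) = 0"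
  by (simp add: frel_def psi_diff psi_power psi_Xv psi_Yv monom_power mult.commute)

lemma psi_dvd: "n \<ge> 2 \<Longrightarrow> frel n dvd p \<Longrightarrow> psi n p = 0"
  by (auto simp: psi_mult psi_frel)

lemma psi_cong: "n \<ge> 2 \<Longrightarrow> frel n dvd (p - q) \<Longrightarrow> psi n p = psi n q"
  using psi_dvd[of n "p - q"] by (simp add: psi_diff)

definition hc :: "'a::field \<Rightarrow> 'a poly poly" where "hc c = [:[:c:]:]"

lemma Rmap_alt: "Rmap (r::'a::field poly) = poly (map_poly hc r) (Xv * Yv)"
  unfolding Rmap_def hc_def[abs_def] by (rule refl)

lemma hc_0: "hc 0 = 0" and hc_add: "hc (x + y) = hc x + hc y" and hc_mult: "hc (x * y) = hc x * hc y"
  and hc_1: "hc 1 = 1"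
  unfolding hc_def by (simp_all add: one_pCons)

lemma Rmap_add: "Rmap (r + s) = Rmap r + Rmap (s::'a::field poly)"
  unfolding Rmap_alt by (simp add: map_poly_hom_add hc_0 hc_add)
lemma Rmap_mult: "Rmap (r * s) = Rmap r * Rmap (s::'a::field poly)"
  unfolding Rmap_alt by (simp add: map_poly_hom_mult hc_0 hc_add hc_mult)
lemma Rmap_0[simp]: "Rmap (0::'a::field poly) = 0" by (simp add: Rmap_alt)
lemma Rmap_1[simp]: "Rmap (1::'a::field poly) = 1" by (simp add: Rmap_alt hc_1)
lemma Rmap_const: "Rmap [:c::'a::field:] = [:[:c:]:]"
  unfolding Rmap_alt by (simp add: map_poly_pCons hc_0 hc_def)
lemma Rmap_x: "Rmap [:0, 1::'a::field:] = Xv * Yv"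
  unfolding Rmap_alt by (simp add: map_poly_pCons hc_0 hc_1)
lemma Rmap_smult: "Rmap (smult (c::'a::field) r) = [:[:c:]:] * Rmap r"
proof -
  have "smult c r = [:c:] * r" by simp
  then show ?thesis by (simp only: Rmap_mult Rmap_const)
qed
lemma Rmap_pCons: "Rmap (pCons (a::'a::field) r) = [:[:a:]:] + Xv * Yv * Rmap r"
  unfolding Rmap_alt by (simp add: map_poly_pCons hc_0 hc_def)

lemma psi_Rmap: "n \<ge> 2 \<Longrightarrow> psi n (Rmap r) = pcompose (r::'a::field poly) (monom 1 n)"
proof (induction r)
  case 0 then show ?case by simp
next
  case (pCons a r)
  have e: "monom (1::'a) 2 * monom 1 (n - 2) = monom 1 n"
    using pCons.prems by (simp add: mult_monom Suc_diff_le[symmetric])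
  have "psi n (Rmap (pCons a r)) = [:a:] + monom 1 2 * monom 1 (n - 2) * psi n (Rmap r)"
    by (simp only: Rmap_pCons psi_add psi_mult psi_const psi_Xv psi_Yv)
  also have "\<dots> = [:a:] + monom 1 n * pcompose r (monom 1 n)"
    using pCons by (simp only: e)
  finally show ?case by (simp only: pcompose_pCons)
qed

definition gen :: "nat \<Rightarrow> int \<Rightarrow> 'a::field poly poly" where
  "gen n k = (if k mod int n = int n - 1 then Yv else Xv ^ nat (k mod int n))"
definition sg :: "nat \<Rightarrow> int \<Rightarrow> nat" where
  "sg n k = (if k mod int n = int n - 1 then n - 2 else 2 * nat (k mod int n))"

lemma psi_gen: "psi n (gen n k) = (monom 1 (sg n k) :: 'a::field poly)"
  by (simp add: gen_def sg_def psi_power psi_Xv psi_Yv monom_power mult.commute)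

lemma gen_mod: "k mod int n = k' mod int n \<Longrightarrow> gen n k = gen n k'"
  by (simp add: gen_def)

definition D :: "nat \<Rightarrow> nat \<Rightarrow> 'a::field poly \<Rightarrow> 'a poly" where
  "D n s P = (THE r. P = monom 1 s * pcompose r (monom 1 n))"

lemma rep_unique:
  assumes "n > 0" "monom 1 s * pcompose r (monom (1::'a::field) n) = monom 1 s * pcompose r' (monom 1 n)"
  shows "r = r'"
proof -
  have "pcompose r (monom (1::'a) n) = pcompose r' (monom 1 n)"
  proof -
    have nz: "monom (1::'a) s \<noteq> 0" by simp
    show ?thesis using mult_left_cancel[OF nz] assms(2) by blast
  qed
  then have "pcompose (r - r') (monom (1::'a) n) = 0" by (metis pcompose_diff right_minus_eq)
  then have "r - r' = 0" proof (rule pcompose_eq_0)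
    show "degree (monom (1::'a) n) > 0" using assms(1) by (simp add: degree_monom_eq)
  qed
  then show ?thesis by simp
qed


lemma D_eq: "n > 0 \<Longrightarrow> D n s (monom 1 s * pcompose r (monom 1 n)) = (r::'a::field poly)"
  unfolding D_def
proof (rule the_equality)
  fix r' assume "n > 0" "monom 1 s * pcompose r (monom (1::'a) n) = monom 1 s * pcompose r' (monom 1 n)"
  then show "r' = r" using rep_unique[of n s r r'] by simp
qed simp

definition SP :: "nat \<Rightarrow> int \<Rightarrow> 'a::field poly poly \<Rightarrow> bool" where
  "SP n k q \<longleftrightarrow> (\<exists>r. frel n dvd (q - gen n k * Rmap r))"

lemma SP_cong: "frel n dvd (q - q') \<Longrightarrow> SP n k q' \<Longrightarrow> SP n k q"
  unfolding SP_def
proof (elim exE)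
  fix r assume a: "frel n dvd (q - q')" "frel n dvd (q' - gen n k * Rmap r)"
  have "q - gen n k * Rmap r = (q - q') + (q' - gen n k * Rmap r)" by simp
  then have "frel n dvd (q - gen n k * Rmap r)" using a by (metis dvd_add)
  then show "\<exists>r. frel n dvd (q - gen n k * Rmap r)" by blast
qed

lemma SP_0: "SP n k 0"
  unfolding SP_def by (rule exI[of _ 0]) simp

lemma SP_add: "SP n k p \<Longrightarrow> SP n k q \<Longrightarrow> SP n k (p + q)"
  unfolding SP_def
proof (elim exE)
  fix r s assume a: "frel n dvd (p - gen n k * Rmap r)" "frel n dvd (q - gen n k * Rmap s)"
  have "p + q - gen n k * Rmap (r + s) = (p - gen n k * Rmap r) + (q - gen n k * Rmap s)"
    by (simp add: Rmap_add algebra_simps)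
  then have "frel n dvd (p + q - gen n k * Rmap (r + s))" using a by (metis dvd_add)
  then show "\<exists>r. frel n dvd (p + q - gen n k * Rmap r)" by blast
qed

lemma SP_cmult: "SP n k q \<Longrightarrow> SP n k (Rmap s * q)"
  unfolding SP_def
proof (elim exE)
  fix r assume a: "frel n dvd (q - gen n k * Rmap r)"
  have "Rmap s * q - gen n k * Rmap (s * r) = Rmap s * (q - gen n k * Rmap r)"
    by (simp add: algebra_simps Rmap_mult)
  then have "frel n dvd (Rmap s * q - gen n k * Rmap (s * r))" using a by (metis dvd_mult)
  then show "\<exists>r. frel n dvd (Rmap s * q - gen n k * Rmap r)" by blast
qed

lemma SP_xy: "SP n k q \<Longrightarrow> SP n k (Xv * Yv * q)"
  using SP_cmult[of n k q "[:0,1:]"] by (simp add: Rmap_x)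

lemma SP_const: "SP n k q \<Longrightarrow> SP n k ([:[:c:]:] * q)"
  using SP_cmult[of n k q "[:c:]"] by (simp add: Rmap_const)

lemma SP_mod: "k mod int n = k' mod int n \<Longrightarrow> SP n k q = SP n k' q"
  unfolding SP_def using gen_mod by metis

lemma SP_gen: "SP n k (gen n k)"
  unfolding SP_def by (rule exI[of _ 1]) simp

lemma SP_sum: "(\<And>x. x \<in> S \<Longrightarrow> SP n k (f x)) \<Longrightarrow> SP n k (sum f S)"
  by (induction S rule: infinite_finite_induct) (simp_all add: SP_0 SP_add)

lemma gen_small: "a < n - 1 \<Longrightarrow> gen n (int a) = Xv ^ a"
  unfolding gen_def by auto

lemma gen_Y: "n \<ge> 2 \<Longrightarrow> gen n (int n - 1) = Yv"
proof -
  assume "n \<ge> 2"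
  then have h: "(int n - 1) mod int n = int n - 1" by (intro mod_pos_pos_trivial) auto
  show ?thesis unfolding gen_def h by simp
qed

lemma gen_mY: "n \<ge> 2 \<Longrightarrow> gen n (- 1) = Yv"
proof -
  assume "n \<ge> 2"
  then have h: "(- 1) mod int n = int n - 1" by (intro zmod_minus1) auto
  show ?thesis unfolding gen_def h by simp
qed

lemma frel_expand: "n \<ge> 2 \<Longrightarrow> frel n = Xv ^ (n - 2) - Yv ^ 2"
  by (simp add: frel_def)

lemma SP_X: "n \<ge> 3 \<Longrightarrow> SP n (int a) ((Xv::'a::field poly poly) ^ a)"
proof (induction a rule: less_induct)
  case (less a)
  show ?case
  proof (cases "a < n - 1")
    case True
    then show ?thesis using SP_gen[of n "int a"] by (simp add: gen_small)
  next
    case False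
    show ?thesis
    proof (cases "a = n - 1")
      case True
      have e: "(Xv::'a poly poly) ^ a = Xv * Xv ^ (n - 2)"
      proof -
        have "a = Suc (n - 2)" using True less.prems by simp
        then show ?thesis by (simp only: power_Suc)
      qed
      have "(Xv::'a poly poly) ^ a - Yv * (Xv * Yv) = Xv * frel n"
        using e by (simp add: frel_def algebra_simps power2_eq_square)
      then have d: "frel n dvd ((Xv::'a poly poly) ^ a - Yv * (Xv * Yv))" by simp
      have "SP n (int a) ((Yv::'a poly poly) * (Xv * Yv))"
        using SP_cmult[OF SP_gen[of n "int a"], of "[:0,1:]"] True less.prems
        by (simp add: Rmap_x gen_Y of_nat_diff mult.commute)
      then show ?thesis using SP_cong d by blast
    next
      case False2: False
      then have ge: "a \<ge> n" using False by simp
      then have lt: "a - n < a" using less.prems by simp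
      have IH: "SP n (int (a - n)) ((Xv::'a poly poly) ^ (a - n))" using less.IH[OF lt less.prems] .
      have md: "int (a - n) mod int n = int a mod int n"
        using ge by (simp add: of_nat_diff)
      have aa: "a = (a - n) + 2 + (n - 2)" using ge less.prems by simp
      have e0: "(Xv::'a poly poly) ^ ((a - n) + 2 + (n - 2)) = Xv ^ (a - n) * Xv ^ 2 * Xv ^ (n - 2)"
        by (simp only: power_add)
      have e: "(Xv::'a poly poly) ^ a = Xv ^ (a - n) * Xv ^ 2 * Xv ^ (n - 2)"
        using e0 aa by metis
      have "(Xv::'a poly poly) ^ a - Xv * Yv * (Xv * Yv * Xv ^ (a - n)) = Xv ^ (a - n) * Xv ^ 2 * frel n"
        using e by (simp add: frel_def algebra_simps power2_eq_square)
      then have d: "frel n dvd ((Xv::'a poly poly) ^ a - Xv * Yv * (Xv * Yv * Xv ^ (a - n)))" by simp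
      have "SP n (int a) ((Xv::'a poly poly) * Yv * (Xv * Yv * Xv ^ (a - n)))"
        by (rule SP_mod[OF md, THEN iffD1, OF SP_xy[OF SP_xy[OF IH]]])
      then show ?thesis using SP_cong d by blast
    qed
  qed
qed

lemma SP_XY: "n \<ge> 3 \<Longrightarrow> SP n (int a - int b) ((Xv::'a::field poly poly) ^ a * Yv ^ b)"
proof (induction b arbitrary: a rule: less_induct)
  case (less b)
  show ?case
  proof (cases "b = 0")
    case True
    then show ?thesis using SP_X[OF less.prems, of a] by simp
  next
    case bnz: False
    show ?thesis
    proof (cases "a = 0")
      case False
      have lt: "b - 1 < b" using bnz by simp
      have IH: "SP n (int (a - 1) - int (b - 1)) ((Xv::'a poly poly) ^ (a - 1) * Yv ^ (b - 1))"
        using less.IH[OF lt less.prems] .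
      have k: "int (a - 1) - int (b - 1) = int a - int b" using False bnz by simp
      have e: "(Xv::'a poly poly) ^ a * Yv ^ b = Xv * Yv * (Xv ^ (a - 1) * Yv ^ (b - 1))"
      proof -
        have "a = Suc (a - 1)" "b = Suc (b - 1)" using False bnz by simp_all
        then show ?thesis by (metis (no_types, lifting) mult.assoc mult.left_commute power_Suc)
      qed
      show ?thesis using SP_xy[OF IH] unfolding k e .
    next
      case a0: True
      show ?thesis
      proof (cases "b = 1")
        case True
        then show ?thesis using a0 SP_gen[of n "-1"] less.prems by (simp add: gen_mY)
      next
        case False
        then have b2: "b \<ge> 2" using bnz by simp
        have lt: "b - 2 < b" using bnz by simp
        have IH: "SP n (int (n - 2) - int (b - 2)) ((Xv::'a poly poly) ^ (n - 2) * Yv ^ (b - 2))"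
          using less.IH[OF lt less.prems] .
        have md: "(int (n - 2) - int (b - 2)) mod int n = (int a - int b) mod int n"
        proof -
          have "int (n - 2) - int (b - 2) = (int a - int b) + int n" using a0 b2 less.prems by simp
          then show ?thesis by simp
        qed
        have bb: "(Yv::'a poly poly) ^ b = Yv ^ 2 * Yv ^ (b - 2)"
        proof -
          have "b = 2 + (b - 2)" using b2 by simp
          then show ?thesis by (metis power_add)
        qed
        have "(Xv::'a poly poly) ^ a * Yv ^ b - Xv ^ (n - 2) * Yv ^ (b - 2) = - (frel n * Yv ^ (b - 2))"
          using a0 bb by (simp add: frel_def algebra_simps)
        then have d: "frel n dvd ((Xv::'a poly poly) ^ a * Yv ^ b - Xv ^ (n - 2) * Yv ^ (b - 2))"
          by (metis dvd_minus_iff dvd_triv_left)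
        show ?thesis using SP_cong[OF d SP_mod[OF md, THEN iffD1, OF IH]] .
      qed
    qed
  qed
qed

lemma Xv_pow: "(Xv::'a::field poly poly) ^ a = [:monom 1 a:]"
proof (induction a)
  case 0 then show ?case by (simp add: monom_0 one_pCons)
next
  case (Suc a)
  have "(Xv::'a poly poly) ^ Suc a = [:[:0,1:]:] * [:monom 1 a:]" using Suc by (simp add: Xv_def)
  also have "\<dots> = [:[:0,1:] * monom 1 a:]" by (rule mult_to_poly)
  also have "[:0,1:] * monom (1::'a) a = monom 1 (Suc a)"
    by (simp add: monom_Suc)
  finally show ?case .
qed

lemma Yv_pow: "(Yv::'a::field poly poly) ^ b = monom 1 b"
  by (simp add: Yv_def monom_altdef)

lemma monom_monom: "monom (monom c a) b = [:[:c::'a::field:]:] * ((Xv::'a poly poly) ^ a * Yv ^ b)"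
proof -
  have "[:[:c:]:] * ((Xv::'a poly poly) ^ a * Yv ^ b) = ([:[:c:]:] * [:monom 1 a:]) * monom 1 b"
    by (simp add: Xv_pow Yv_pow mult.assoc)
  also have "\<dots> = [:[:c:] * monom 1 a:] * monom 1 b" by (simp only: mult_to_poly)
  also have "\<dots> = monom (monom c a) b" by (simp add: smult_monom)
  finally show ?thesis by simp
qed

lemma monom_sum: "monom (sum f S) b = sum (\<lambda>x. monom (f x) b) S"
  by (induction S rule: infinite_finite_induct) (simp_all add: add_monom[symmetric])

lemma SP_hom:
  assumes n3: "n \<ge> 3" and h: "T_hom n k (p::'a::field poly poly)"
  shows "SP n k p"
proof -
  have p: "p = (\<Sum>b\<le>degree p. \<Sum>a\<le>degree (coeff p b). monom (monom (coeff (coeff p b) a) a) b)"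
  proof -
    have "p = (\<Sum>b\<le>degree p. monom (coeff p b) b)" by (simp add: poly_as_sum_of_monoms)
    also have "\<dots> = (\<Sum>b\<le>degree p. monom (\<Sum>a\<le>degree (coeff p b). monom (coeff (coeff p b) a) a) b)"
      by (simp add: poly_as_sum_of_monoms)
    also have "\<dots> = (\<Sum>b\<le>degree p. \<Sum>a\<le>degree (coeff p b). monom (monom (coeff (coeff p b) a) a) b)"
      by (simp add: monom_sum)
    finally show ?thesis .
  qed
  have "SP n k (monom (monom (coeff (coeff p b) a) a) b)" for a b
  proof (cases "coeff (coeff p b) a = 0")
    case True then show ?thesis by (simp add: SP_0)
  next
    case False
    then have "int n dvd (int a - int b - k)" using h by (auto simp: T_hom_def)
    then have md: "(int a - int b) mod int n = k mod int n"
      by (metis mod_eq_dvd_iff)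
    show ?thesis unfolding monom_monom
      by (rule SP_const, rule SP_mod[OF md, THEN iffD1, OF SP_XY[OF n3]])
  qed
  then have "SP n k (\<Sum>b\<le>degree p. \<Sum>a\<le>degree (coeff p b). monom (monom (coeff (coeff p b) a) a) b)"
    by (intro SP_sum) auto
  then show ?thesis using p by simp
qed

lemma psi_hom:
  assumes "n \<ge> 3" "T_hom n k (p::'a::field poly poly)"
  shows "\<exists>r. psi n p = monom 1 (sg n k) * pcompose r (monom 1 n)"
proof -
  obtain r where d: "frel n dvd (p - gen n k * Rmap r)" using SP_hom[OF assms] unfolding SP_def by blast
  have "psi n p = psi n (gen n k * Rmap r)" using psi_cong[OF _ d] assms(1) by simp
  also have "\<dots> = monom 1 (sg n k) * pcompose r (monom 1 n)"
    using assms(1) by (simp add: psi_mult psi_gen psi_Rmap)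
  finally show ?thesis by blast
qed

lemma ker_hom:
  assumes n3: "n \<ge> 3" and hp: "T_hom n k (p::'a::field poly poly)" and hq: "T_hom n k q"
    and e: "psi n p = psi n q"
  shows "frel n dvd (p - q)"
proof -
  obtain r where d: "frel n dvd (p - gen n k * Rmap r)" using SP_hom[OF n3 hp] unfolding SP_def by blast
  obtain r' where d': "frel n dvd (q - gen n k * Rmap r')" using SP_hom[OF n3 hq] unfolding SP_def by blast
  have "psi n p = monom 1 (sg n k) * pcompose r (monom 1 n)"
    using psi_cong[OF _ d] n3 by (simp add: psi_mult psi_gen psi_Rmap)
  moreover have "psi n q = monom 1 (sg n k) * pcompose r' (monom 1 n)"
    using psi_cong[OF _ d'] n3 by (simp add: psi_mult psi_gen psi_Rmap)
  ultimately have "r = r'" using e rep_unique[of n "sg n k" r r'] n3 by simp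
  then have "p - q = (p - gen n k * Rmap r) - (q - gen n k * Rmap r')" by simp
  then show ?thesis using d d' by (metis dvd_diff)
qed

lemma mod_small_pos: "0 \<le> k \<Longrightarrow> k < int n \<Longrightarrow> k mod int n = k"
  by (rule mod_pos_pos_trivial)

lemma mod_small_neg: "- int n \<le> k \<Longrightarrow> k < 0 \<Longrightarrow> k mod int n = k + int n"
proof -
  assume a: "- int n \<le> k" "k < 0"
  have "k mod int n = (k + int n) mod int n" by simp
  also have "\<dots> = k + int n" using a by (intro mod_pos_pos_trivial) auto
  finally show ?thesis .
qed

lemma sg_arith:
  assumes n3: "n \<ge> 3" and r: "inrng n i j"
  shows "int (sg n (int j - int i)) = int n * cexp n i j + 2 * int j - 2 * int i"
proof -
  from r have i: "1 \<le> i" "i \<le> n" and j: "1 \<le> j" "j \<le> n" by (auto simp: inrng_def)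
  consider (a) "i \<le> j" "\<not> (i = 1 \<and> j = n)" | (b) "i = 1" "j = n" | (c) "i = j + 1" | (d) "i \<ge> j + 2"
    by linarith
  then show ?thesis
  proof cases
    case a
    then have "j - i \<le> n - 2" using i j by auto
    then have m: "(int j - int i) mod int n = int j - int i" using a i j n3 by (intro mod_small_pos) auto
    show ?thesis unfolding sg_def m using a i j n3 \<open>j - i \<le> n - 2\<close> by (auto simp: cexp_def)
  next
    case b
    then have e: "int j - int i = int n - 1" by simp
    have m: "(int j - int i) mod int n = int n - 1" unfolding e using n3 by (intro mod_small_pos) auto
    show ?thesis unfolding sg_def m using b n3 by (auto simp: cexp_def)
  next
    case c
    then have m: "(int j - int i) mod int n = int j - int i + int n" using n3 by (intro mod_small_neg) auto
    show ?thesis unfolding sg_def m using c n3 by (auto simp: cexp_def)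
  next
    case d
    then have m: "(int j - int i) mod int n = int j - int i + int n" using n3 i j by (intro mod_small_neg) auto
    show ?thesis unfolding sg_def m using d n3 i j by (auto simp: cexp_def)
  qed
qed

lemma cexp_arith:
  assumes "inrng n i l" "inrng n l j" "n \<ge> 3"
  shows "cexp n i j \<le> cexp n i l + cexp n l j"
  using assms unfolding inrng_def cexp_def by (auto split: if_splits)

lemma T_hom_0: "T_hom n k 0" by (simp add: T_hom_def)

lemma T_hom_add: "T_hom n k p \<Longrightarrow> T_hom n k q \<Longrightarrow> T_hom n k (p + q)"
  unfolding T_hom_def by (metis add.right_neutral coeff_add)

lemma T_hom_sum: "(\<And>x. x \<in> S \<Longrightarrow> T_hom n k (f x)) \<Longrightarrow> T_hom n k (sum f S)"
  by (induction S rule: infinite_finite_induct) (simp_all add: T_hom_0 T_hom_add)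

lemma T_hom_monom: "int n dvd (int a - int b - k) \<Longrightarrow> T_hom n k (monom (monom c a) b)"
  unfolding T_hom_def by (auto simp: coeff_monom split: if_splits)

lemma Rmap_sum: "Rmap (sum f S) = sum (\<lambda>x. Rmap (f x :: 'a::field poly)) S"
  by (induction S rule: infinite_finite_induct) (simp_all add: Rmap_add)

lemma Rmap_power: "Rmap (r ^ m) = Rmap (r::'a::field poly) ^ m"
  by (induction m) (simp_all add: Rmap_mult)

lemma Rmap_form: "Rmap (r::'a::field poly) = (\<Sum>m\<le>degree r. [:[:coeff r m:]:] * ((Xv::'a poly poly) * Yv) ^ m)"
proof -
  have "Rmap r = Rmap (\<Sum>m\<le>degree r. monom (coeff r m) m)" by (simp add: poly_as_sum_of_monoms)
  also have "\<dots> = (\<Sum>m\<le>degree r. Rmap (smult (coeff r m) ([:0,1:] ^ m)))"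
    by (simp add: Rmap_sum monom_altdef)
  also have "\<dots> = (\<Sum>m\<le>degree r. [:[:coeff r m:]:] * ((Xv::'a poly poly) * Yv) ^ m)"
    by (simp add: Rmap_smult Rmap_power Rmap_x)
  finally show ?thesis .
qed

lemma T_hom_gen_Rmap:
  assumes n3: "n \<ge> 3"
  shows "T_hom n k (gen n k * Rmap (r::'a::field poly))"
proof -
  have "gen n k * Rmap r = (\<Sum>m\<le>degree r. gen n k * ([:[:coeff r m:]:] * ((Xv::'a poly poly) * Yv) ^ m))"
    by (simp add: Rmap_form sum_distrib_left)
  also have "T_hom n k \<dots>"
  proof (rule T_hom_sum)
    fix m
    show "T_hom n k (gen n k * ([:[:coeff r m:]:] * ((Xv::'a poly poly) * Yv) ^ m))"
    proof (cases "k mod int n = int n - 1")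
      case True
      have "gen n k * ([:[:coeff r m:]:] * ((Xv::'a poly poly) * Yv) ^ m)
            = [:[:coeff r m:]:] * (Xv ^ m * Yv ^ (Suc m))"
        using True by (simp add: gen_def power_mult_distrib algebra_simps)
      also have "\<dots> = monom (monom (coeff r m) m) (Suc m)" by (simp add: monom_monom)
      also have "T_hom n k \<dots>"
      proof (rule T_hom_monom)
        have "int n dvd (k - k mod int n)" by (simp add: mod_eq_dvd_iff)
        then have "int n dvd (k - (int n - 1))" using True by simp
        then have "int n dvd (- (k - (int n - 1)) - int n)" by (metis dvd_diff dvd_minus_iff dvd_refl)
        then show "int n dvd (int m - int (Suc m) - k)" by (simp add: algebra_simps)
      qed
      finally show ?thesis .
    next
      case False
      define e where "e = nat (k mod int n)"
      have ek: "int e = k mod int n" unfolding e_def using n3 by simp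
      have "gen n k * ([:[:coeff r m:]:] * ((Xv::'a poly poly) * Yv) ^ m)
            = [:[:coeff r m:]:] * (Xv ^ (e + m) * Yv ^ m)"
        using False by (simp add: gen_def e_def power_mult_distrib power_add algebra_simps)
      also have "\<dots> = monom (monom (coeff r m) (e + m)) m" by (simp add: monom_monom)
      also have "T_hom n k \<dots>"
      proof (rule T_hom_monom)
        have "int n dvd (k mod int n - k)" by (metis dvd_minus_iff minus_diff_eq mod_eq_dvd_iff mod_mod_trivial)
        then show "int n dvd (int (e + m) - int m - k)" using ek by simp
      qed
      finally show ?thesis .
    qed
  qed
  finally show ?thesis .
qed

lemma Srep_Scls: "frel n dvd (Srep (Scls n p) - p)"
proof -
  have "p \<in> Scls n p" by (simp add: Scls_def)
  then have "Srep (Scls n p) \<in> Scls n p" unfolding Srep_def by (rule someI)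
  then show ?thesis by (simp add: Scls_def)
qed

lemma psi_Srep: "n \<ge> 2 \<Longrightarrow> psi n (Srep (Scls n p)) = psi n (p::'a::field poly poly)"
  by (rule psi_cong[OF _ Srep_Scls])

lemma Scls_eq: "frel n dvd (p - q) \<Longrightarrow> Scls n p = Scls n q"
  unfolding Scls_def
proof (intro Collect_cong iffI)
  fix x assume "frel n dvd (p - q)" "frel n dvd (x - p)"
  then have "frel n dvd ((x - p) + (p - q))" by (rule dvd_add[rotated])
  then show "frel n dvd (x - q)" by simp
next
  fix x assume "frel n dvd (p - q)" "frel n dvd (x - q)"
  then have "frel n dvd ((x - q) - (p - q))" by (rule dvd_diff[rotated])
  then show "frel n dvd (x - p)" by simp
qed

definition ent :: "nat \<Rightarrow> (nat \<Rightarrow> nat \<Rightarrow> 'a::field poly poly set) \<Rightarrow> nat \<Rightarrow> nat \<Rightarrow> 'a poly" where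
  "ent n A i j = D n (sg n (int j - int i)) (psi n (Srep (A i j)))"

definition phi :: "nat \<Rightarrow> (nat \<Rightarrow> nat \<Rightarrow> 'a::field poly poly set) \<Rightarrow> nat \<Rightarrow> nat \<Rightarrow> 'a poly fract" where
  "phi n A = (\<lambda>i j. if inrng n i j then xK powi cexp n i j * Fract (ent n A i j) 1 else 0)"

lemma ent_eq:
  assumes "n \<ge> 3" "psi n (Srep (A i j)) = monom 1 (sg n (int j - int i)) * pcompose r (monom 1 n)"
  shows "ent n A i j = r"
  unfolding ent_def assms(2) using assms(1) by (intro D_eq) simp

lemma ent_rep:
  assumes n3: "n \<ge> 3" and A: "A \<in> Sn n" and r: "inrng n i j"
  shows "psi n (Srep (A i j)) = monom 1 (sg n (int j - int i)) * pcompose (ent n A i j) (monom 1 n)"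
proof -
  from A r have "A i j \<in> Sgr n (int j - int i)" by (simp add: Sn_def)
  then obtain q where q: "A i j = Scls n q" "T_hom n (int j - int i) q" by (auto simp: Sgr_def)
  obtain r where e: "psi n q = monom 1 (sg n (int j - int i)) * pcompose r (monom 1 n)"
    using psi_hom[OF n3 q(2)] by blast
  have e2: "psi n (Srep (A i j)) = monom 1 (sg n (int j - int i)) * pcompose r (monom 1 n)"
    using e q(1) psi_Srep[of n q] n3 by simp
  then show ?thesis using ent_eq[of n A i j r, OF n3 e2] by simp
qed

lemma Fract_add1: "Fract (a + b) 1 = Fract a 1 + Fract (b::'a::idom) 1"
  by simp

lemma Fract_mult1: "Fract (a * b) 1 = Fract a 1 * Fract (b::'a::idom) 1"
  by simp

lemma Fract_sum: "Fract (sum f S) 1 = sum (\<lambda>x. Fract (f x :: 'a::idom) 1) S"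
  by (induction S rule: infinite_finite_induct) (simp_all add: Zero_fract_def Fract_add1)

lemma Fract_power: "Fract (p ^ d) 1 = Fract (p::'a::idom) 1 ^ d"
  by (induction d) (simp_all add: One_fract_def Fract_mult1)

lemma xK_nz: "xK \<noteq> 0"
  unfolding xK_def Zero_fract_def by (simp add: eq_fract)

lemma Fract_monom: "Fract (monom 1 d) 1 = (xK::'a::field poly fract) ^ d"
  unfolding xK_def by (simp add: monom_altdef Fract_power)

lemma Fract_inj: "Fract a 1 = Fract b 1 \<Longrightarrow> a = (b::'a::idom)"
  by (simp add: eq_fract)

lemma pcompose_monom1: "pcompose (monom 1 d) q = (q::'a::field poly) ^ d"
proof -
  have "pcompose ([:0,1:] ^ d) q = q ^ d"
    by (induction d) (simp_all add: pcompose_mult pcompose_1 pcompose_pCons)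
  then show ?thesis by (simp add: monom_altdef)
qed

lemma pcompose_sum: "pcompose (sum f S) q = sum (\<lambda>x. pcompose (f x) (q::'a::field poly)) S"
  by (induction S rule: infinite_finite_induct) (simp_all add: pcompose_add)

lemma phi_add:
  assumes n3: "n \<ge> 3" and A: "A \<in> Sn n" and B: "B \<in> Sn n"
  shows "phi n (Smat_add n A B) = Lmat_add n (phi n A) (phi n (B :: nat \<Rightarrow> nat \<Rightarrow> 'a::field poly poly set))"
proof (intro ext)
  fix i j
  show "phi n (Smat_add n A B) i j = Lmat_add n (phi n A) (phi n B) i j"
  proof (cases "inrng n i j")
    case False then show ?thesis by (simp add: phi_def Lmat_add_def)
  next
    case True
    let ?s = "sg n (int j - int i)"
    have "psi n (Srep (Smat_add n A B i j)) = psi n (Srep (A i j)) + psi n (Srep (B i j))"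
      using True n3 by (simp add: Smat_add_def psi_Srep psi_add)
    also have "\<dots> = monom 1 ?s * pcompose (ent n A i j + ent n B i j) (monom 1 n)"
      using ent_rep[OF n3 A True] ent_rep[OF n3 B True] by (simp add: pcompose_add algebra_simps)
    finally have "ent n (Smat_add n A B) i j = ent n A i j + ent n B i j"
      by (rule ent_eq[of n "Smat_add n A B" i j, OF n3])
    then show ?thesis unfolding phi_def Lmat_add_def
      by (simp only: True if_True Fract_add1 distrib_left)
  qed
qed

lemma phi_scale:
  assumes n3: "n \<ge> 3" and A: "A \<in> Sn n"
  shows "phi n (Smat_scale n r A) = Lmat_scale n r (phi n (A :: nat \<Rightarrow> nat \<Rightarrow> 'a::field poly poly set))"
proof (intro ext)
  fix i j
  show "phi n (Smat_scale n r A) i j = Lmat_scale n r (phi n A) i j"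
  proof (cases "inrng n i j")
    case False then show ?thesis by (simp add: phi_def Lmat_scale_def)
  next
    case True
    let ?s = "sg n (int j - int i)"
    have "psi n (Srep (Smat_scale n r A i j)) = psi n (Rmap r) * psi n (Srep (A i j))"
      using True n3 by (simp add: Smat_scale_def psi_Srep psi_mult)
    also have "\<dots> = monom 1 ?s * pcompose (r * ent n A i j) (monom 1 n)"
      using ent_rep[OF n3 A True] n3 by (simp add: psi_Rmap pcompose_mult algebra_simps)
    finally have "ent n (Smat_scale n r A) i j = r * ent n A i j"
      by (rule ent_eq[of n "Smat_scale n r A" i j, OF n3])
    then show ?thesis unfolding phi_def Lmat_scale_def
      by (simp only: True if_True Fract_mult1 mult.left_commute)
  qed
qed

lemma sg0: "n \<ge> 3 \<Longrightarrow> sg n 0 = 0"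
  by (simp add: sg_def)

lemma phi_one:
  assumes n3: "n \<ge> 3"
  shows "phi n (Smat_one n :: nat \<Rightarrow> nat \<Rightarrow> 'a::field poly poly set) = Lmat_one n"
proof (intro ext)
  fix i j
  show "phi n (Smat_one n :: nat \<Rightarrow> nat \<Rightarrow> 'a::field poly poly set) i j = Lmat_one n i j"
  proof (cases "inrng n i j")
    case False then show ?thesis by (simp add: phi_def Lmat_one_def)
  next
    case True
    show ?thesis
    proof (cases "i = j")
      case ij: True
      have "psi n (Srep ((Smat_one n :: nat \<Rightarrow> nat \<Rightarrow> 'a::field poly poly set) i j))
          = monom 1 (sg n (int j - int i)) * pcompose 1 (monom 1 n)"
        using True ij n3 by (simp add: Smat_one_def psi_Srep sg0 pcompose_1 monom_0 one_pCons psi_const)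
      then have "ent n (Smat_one n :: nat \<Rightarrow> nat \<Rightarrow> 'a::field poly poly set) i j = 1"
        by (rule ent_eq[of n "Smat_one n" i j, OF n3])
      moreover have "cexp n i j = 0" using ij n3 by (simp add: cexp_def)
      ultimately show ?thesis using True ij by (simp add: phi_def Lmat_one_def One_fract_def[symmetric])
    next
      case ij: False
      have "psi n (Srep ((Smat_one n :: nat \<Rightarrow> nat \<Rightarrow> 'a::field poly poly set) i j))
          = monom 1 (sg n (int j - int i)) * pcompose 0 (monom 1 n)"
        using True ij n3 by (simp add: Smat_one_def psi_Srep)
      then have "ent n (Smat_one n :: nat \<Rightarrow> nat \<Rightarrow> 'a::field poly poly set) i j = 0"
        by (rule ent_eq[of n "Smat_one n" i j, OF n3])
      then show ?thesis using True ij by (simp add: phi_def Lmat_one_def Zero_fract_def[symmetric])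
    qed
  qed
qed

lemma mul_term:
  assumes n3: "n \<ge> 3" and il: "inrng n i l" and lj: "inrng n l j"
  defines "d \<equiv> nat (cexp n i l + cexp n l j - cexp n i j)"
  shows "monom 1 (sg n (int l - int i)) * pcompose a (monom 1 n) * (monom 1 (sg n (int j - int l)) * pcompose b (monom 1 n))
       = monom 1 (sg n (int j - int i)) * pcompose (monom 1 d * a * b) (monom (1::'a::field) n)"
proof -
  have ij: "inrng n i j" using il lj by (simp add: inrng_def)
  have c: "cexp n i j \<le> cexp n i l + cexp n l j" by (rule cexp_arith[OF il lj n3])
  have "int (sg n (int l - int i)) + int (sg n (int j - int l)) = int (sg n (int j - int i)) + int (n * d)"
    using sg_arith[OF n3 il] sg_arith[OF n3 lj] sg_arith[OF n3 ij] c
    by (simp add: d_def algebra_simps)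
  then have s: "sg n (int l - int i) + sg n (int j - int l) = sg n (int j - int i) + n * d" by linarith
  have "monom 1 (sg n (int j - int i)) * pcompose (monom 1 d * a * b) (monom (1::'a::field) n)
      = monom 1 (sg n (int j - int i)) * monom 1 (n * d) * pcompose a (monom 1 n) * pcompose b (monom 1 n)"
    by (simp add: pcompose_mult pcompose_monom1 monom_power mult.assoc)
  also have "\<dots> = monom 1 (sg n (int l - int i) + sg n (int j - int l)) * pcompose a (monom 1 n) * pcompose b (monom 1 n)"
    by (simp only: s mult_monom mult_1)
  also have "\<dots> = monom 1 (sg n (int l - int i)) * pcompose a (monom 1 n) * (monom 1 (sg n (int j - int l)) * pcompose b (monom 1 n))"
  proof -
    have m: "monom (1::'a) (sg n (int l - int i) + sg n (int j - int l)) = monom 1 (sg n (int l - int i)) * monom 1 (sg n (int j - int l))"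
      by (simp add: mult_monom)
    show ?thesis unfolding m by (simp add: mult_ac)
  qed
  finally show ?thesis by simp
qed

lemma powi_term:
  assumes n3: "n \<ge> 3" and il: "inrng n i l" and lj: "inrng n l j"
  defines "d \<equiv> nat (cexp n i l + cexp n l j - cexp n i j)"
  shows "xK powi cexp n i j * (xK::'a::field poly fract) ^ d = xK powi cexp n i l * xK powi cexp n l j"
proof -
  have c: "cexp n i j \<le> cexp n i l + cexp n l j" by (rule cexp_arith[OF il lj n3])
  have "(xK::'a poly fract) ^ d = xK powi (cexp n i l + cexp n l j - cexp n i j)"
    using c by (simp add: d_def flip: power_int_of_nat)
  then have "xK powi cexp n i j * (xK::'a::field poly fract) ^ d
     = xK powi cexp n i j * xK powi (cexp n i l + cexp n l j - cexp n i j)" by simp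
  also have "\<dots> = xK powi (cexp n i j + (cexp n i l + cexp n l j - cexp n i j))"
    by (rule power_int_add[symmetric]) (simp add: xK_nz)
  also have "\<dots> = xK powi (cexp n i l + cexp n l j)" by simp
  also have "\<dots> = xK powi cexp n i l * xK powi cexp n l j"
    by (rule power_int_add) (simp add: xK_nz)
  finally show ?thesis .
qed

lemma phi_mul:
  assumes n3: "n \<ge> 3" and A: "A \<in> Sn n" and B: "B \<in> Sn n"
  shows "phi n (Smat_mul n A B) = Lmat_mul n (phi n A) (phi n (B :: nat \<Rightarrow> nat \<Rightarrow> 'a::field poly poly set))"
proof (intro ext)
  fix i j
  show "phi n (Smat_mul n A B) i j = Lmat_mul n (phi n A) (phi n B) i j"
  proof (cases "inrng n i j")
    case False then show ?thesis by (simp add: phi_def Lmat_mul_def)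
  next
    case True
    define d where "d = (\<lambda>l. nat (cexp n i l + cexp n l j - cexp n i j))"
    have il: "inrng n i l" and lj: "inrng n l j" if "l \<in> {1..n}" for l
      using True that by (auto simp: inrng_def)
    have "psi n (Srep (Smat_mul n A B i j)) = (\<Sum>l\<in>{1..n}. psi n (Srep (A i l)) * psi n (Srep (B l j)))"
      using True n3 by (simp add: Smat_mul_def psi_Srep psi_sum psi_mult)
    also have "\<dots> = (\<Sum>l\<in>{1..n}. monom 1 (sg n (int j - int i)) *
                  pcompose (monom 1 (d l) * ent n A i l * ent n B l j) (monom 1 n))"
    proof (rule sum.cong[OF refl])
      fix l assume l: "l \<in> {1..n}"
      show "psi n (Srep (A i l)) * psi n (Srep (B l j)) = monom 1 (sg n (int j - int i)) *
                  pcompose (monom 1 (d l) * ent n A i l * ent n B l j) (monom 1 n)"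
        unfolding ent_rep[OF n3 A il[OF l]] ent_rep[OF n3 B lj[OF l]] d_def
        by (rule mul_term[OF n3 il[OF l] lj[OF l]])
    qed
    also have "\<dots> = monom 1 (sg n (int j - int i)) *
                  pcompose (\<Sum>l\<in>{1..n}. monom 1 (d l) * ent n A i l * ent n B l j) (monom 1 n)"
      by (simp add: pcompose_sum sum_distrib_left)
    finally have e: "ent n (Smat_mul n A B) i j = (\<Sum>l\<in>{1..n}. monom 1 (d l) * ent n A i l * ent n B l j)"
      by (rule ent_eq[of n "Smat_mul n A B" i j, OF n3])
    have "phi n (Smat_mul n A B) i j = (\<Sum>l\<in>{1..n}. xK powi cexp n i j * Fract (monom 1 (d l) * ent n A i l * ent n B l j) 1)"
      unfolding phi_def e using True by (simp add: Fract_sum sum_distrib_left)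
    also have "\<dots> = (\<Sum>l\<in>{1..n}. phi n A i l * phi n B l j)"
    proof (rule sum.cong[OF refl])
      fix l assume l: "l \<in> {1..n}"
      have "xK powi cexp n i j * Fract (monom 1 (d l) * ent n A i l * ent n B l j) 1
          = (xK powi cexp n i j * Fract (monom 1 (d l)) 1) * Fract (ent n A i l) 1 * Fract (ent n B l j) 1"
        by (simp only: Fract_mult1 mult.assoc)
      also have "\<dots> = (xK powi cexp n i l * xK powi cexp n l j) * Fract (ent n A i l) 1 * Fract (ent n B l j) 1"
        unfolding Fract_monom d_def by (simp only: powi_term[OF n3 il[OF l] lj[OF l]])
      also have "\<dots> = phi n A i l * phi n B l j"
        using il[OF l] lj[OF l] by (simp add: phi_def mult_ac)
      finally show "xK powi cexp n i j * Fract (monom 1 (d l) * ent n A i l * ent n B l j) 1 = phi n A i l * phi n B l j" .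
    qed
    finally show ?thesis using True by (simp add: Lmat_mul_def)
  qed
qed

lemma phi_Lam: "phi n A \<in> Lam n"
  unfolding Lam_def phi_def by auto

lemma phi_inj:
  assumes n3: "n \<ge> 3"
  shows "inj_on (phi n) (Sn n :: (nat \<Rightarrow> nat \<Rightarrow> 'a::field poly poly set) set)"
proof (rule inj_onI)
  fix A B :: "nat \<Rightarrow> nat \<Rightarrow> 'a::field poly poly set"
  assume A: "A \<in> Sn n" and B: "B \<in> Sn n" and e: "phi n A = phi n B"
  show "A = B"
  proof (intro ext)
    fix i j
    show "A i j = B i j"
    proof (cases "inrng n i j")
      case False then show ?thesis using A B by (simp add: Sn_def)
    next
      case True
      have "xK powi cexp n i j * Fract (ent n A i j) 1 = xK powi cexp n i j * Fract (ent n B i j) 1"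
        using fun_cong[OF fun_cong[OF e, of i], of j] True by (simp add: phi_def)
      then have "Fract (ent n A i j) 1 = Fract (ent n B i j) 1"
        using xK_nz by auto
      then have ee: "ent n A i j = ent n B i j" by (rule Fract_inj)
      have ps: "psi n (Srep (A i j)) = psi n (Srep (B i j))"
        using ent_rep[OF n3 A True] ent_rep[OF n3 B True] ee by simp
      from A True have "A i j \<in> Sgr n (int j - int i)" by (simp add: Sn_def)
      then obtain qa where qa: "A i j = Scls n qa" "T_hom n (int j - int i) qa" by (auto simp: Sgr_def)
      from B True have "B i j \<in> Sgr n (int j - int i)" by (simp add: Sn_def)
      then obtain qb where qb: "B i j = Scls n qb" "T_hom n (int j - int i) qb" by (auto simp: Sgr_def)
      have "psi n qa = psi n qb" using ps qa(1) qb(1) psi_Srep[of n qa] psi_Srep[of n qb] n3 by simp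
      then have "frel n dvd (qa - qb)" by (rule ker_hom[OF n3 qa(2) qb(2)])
      then show ?thesis using qa(1) qb(1) Scls_eq by metis
    qed
  qed
qed

lemma phi_surj:
  assumes n3: "n \<ge> 3" and L: "L \<in> Lam n"
  shows "\<exists>A \<in> (Sn n :: (nat \<Rightarrow> nat \<Rightarrow> 'a::field poly poly set) set). phi n A = L"
proof -
  define P where "P = (\<lambda>i j. SOME p. L i j = xK powi cexp n i j * Fract p 1)"
  have P: "L i j = xK powi cexp n i j * Fract (P i j) 1" if "inrng n i j" for i j
    using L that unfolding Lam_def P_def by (auto intro: someI_ex)
  define A :: "nat \<Rightarrow> nat \<Rightarrow> 'a::field poly poly set" where
    "A = (\<lambda>i j. if inrng n i j then Scls n (gen n (int j - int i) * Rmap (P i j)) else Scls n 0)"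
  have AS: "A \<in> Sn n"
    unfolding Sn_def Sgr_def A_def using T_hom_gen_Rmap[OF n3] by auto
  have "phi n A = L"
  proof (intro ext)
    fix i j
    show "phi n A i j = L i j"
    proof (cases "inrng n i j")
      case False then show ?thesis using L by (simp add: phi_def Lam_def)
    next
      case True
      have "psi n (Srep (A i j)) = monom 1 (sg n (int j - int i)) * pcompose (P i j) (monom 1 n)"
        using True n3 by (simp add: A_def psi_Srep psi_mult psi_gen psi_Rmap)
      then have "ent n A i j = P i j" by (rule ent_eq[of n A i j, OF n3])
      then show ?thesis using True P[OF True] by (simp add: phi_def)
    qed
  qed
  then show ?thesis using AS by blast
qed

theorem proposition3p24:
  fixes n :: nat
  assumes "n \<ge> 3"
  shows "\<exists>\<phi> :: (nat \<Rightarrow> nat \<Rightarrow> 'a::field poly poly set) \<Rightarrow> (nat \<Rightarrow> nat \<Rightarrow> 'a poly fract).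
           bij_betw \<phi> (Sn n) (Lam n)
         \<and> (\<forall>A\<in>Sn n. \<forall>B\<in>Sn n. \<phi> (Smat_add n A B) = Lmat_add n (\<phi> A) (\<phi> B))
         \<and> (\<forall>A\<in>Sn n. \<forall>B\<in>Sn n. \<phi> (Smat_mul n A B) = Lmat_mul n (\<phi> A) (\<phi> B))
         \<and> \<phi> (Smat_one n) = Lmat_one n
         \<and> (\<forall>r. \<forall>A\<in>Sn n. \<phi> (Smat_scale n r A) = Lmat_scale n r (\<phi> A))"
proof (intro exI[of _ "phi n"] conjI ballI allI)
  show "bij_betw (phi n) (Sn n :: (nat \<Rightarrow> nat \<Rightarrow> 'a::field poly poly set) set) (Lam n)"
    unfolding bij_betw_def
  proof
    show "inj_on (phi n) (Sn n :: (nat \<Rightarrow> nat \<Rightarrow> 'a::field poly poly set) set)" by (rule phi_inj[OF assms])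
    show "phi n ` (Sn n :: (nat \<Rightarrow> nat \<Rightarrow> 'a::field poly poly set) set) = Lam n"
      using phi_Lam phi_surj[OF assms] by blast
  qed
qed (simp_all add: assms phi_add phi_mul phi_one phi_scale)

end
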